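(* Let $G$ be a $\lambda$-graph and $Q$ a query over $G$. Then $Q^{\Downarrow}$ is an open bisimulation if and only if $Q^{\#}$ is a sharing equivalence.
   Context: A pre-$\lambda$-graph is a directed graph whose nodes are of four kinds: an application node $@(n_1,n_2)$ has exactly two children, its left child $n_1$ and its right child $n_2$; an abstraction node $\lambda(n)$ has exactly one child, its body $n$; a free variable node has no children and carries an atom $\mathrm{id}(n)$ from a fixed set of atoms, distinct free variable nodes carrying distinct atoms; a bound variable node $\mathrm{var}(l)$ has exactly one outgoing binding edge, to an abstraction node $l$ (its binder). A trace is a finite sequence of directions from $\{\swarrow,\downarrow,\searrow\}$; $\epsilon$ is the empty trace and $d\cdot\tau$ is the trace $\tau$ extended by one final step $d$. Paths $n\xrightarrow{\tau}m$ are defined inductively: $n\xrightarrow{\epsilon}n$; if $n\xrightarrow{\tau}\lambda(m)$ then $n\xrightarrow{\downarrow\cdot\tau}m$; if $n\xrightarrow{\tau}@(m_1,m_2)$ then $n\xrightarrow{\swarrow\cdot\tau}m_1$ and $n\xrightarrow{\searrow\cdot\tau}m_2$ (binding edges are never followed). The path $n\xrightarrow{\tau}$ crosses a node $m$ if either $n\xrightarrow{\tau}m$, or $\tau=d\cdot\tau'$ and $n\xrightarrow{\tau'}$ crosses $m$. A root is a node $r$ such that the only path ending in $r$ has the empty trace. A node $m$ dominates $n$ if every path from a root to $n$ crosses $m$. A $\lambda$-graph is a pre-$\lambda$-graph that has finitely many nodes, is acyclic ($n\xrightarrow{\tau}n$ holds only for $\tau=\epsilon$), and is dominated (every bound variable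 node $\mathrm{var}(l)$ is dominated by its binder $l$). Two nodes are homogeneous if both are application nodes, or both abstraction nodes, or both free variable nodes, or both bound variable nodes; a binary relation $R$ on nodes is homogeneous if it only relates homogeneous nodes. Rules: $(\swarrow)$: $@(n_1,n_2)\,R\,@(m_1,m_2)$ implies $n_1\,R\,m_1$; $(\searrow)$: $@(n_1,n_2)\,R\,@(m_1,m_2)$ implies $n_2\,R\,m_2$; $(\downarrow)$: $\lambda(n)\,R\,\lambda(m)$ implies $n\,R\,m$; $(\circlearrowright)$: $\mathrm{var}(n)\,R\,\mathrm{var}(m)$ implies $n\,R\,m$. $R$ is propagated if closed under $(\swarrow),(\downarrow),(\searrow)$. $R$ is open if $n\,R\,m$ implies $n=m$ for all free variable nodes $n,m$. A bisimulation is a homogeneous propagated relation closed also under $(\circlearrowright)$. A sharing equivalence is an open bisimulation that is an equivalence relation. $R^{\Downarrow}$ (propagation) is the smallest propagated relation containing $R$; $R^{\#}$ (spreading) is the smallest propagated equivalence relation containing $R$. A query over $G$ is a binary relation on the roots of $G$. *)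

theory Defs
  imports Main
begin

text \<open>Node kinds of a pre-lambda-graph. A graph on node type 'n with atoms 'a is a
labelling function G :: 'n \<Rightarrow> ('n,'a) node; the nodes of the graph are all elements
of type 'n.\<close>

datatype ('n, 'a) node = App 'n 'n | Abs 'n | FVar 'a | BVar 'n

datatype dir = DLeft | DDown | DRight

text \<open>Traces: lists of directions; the head of the list is the final step,
so d # tau is the trace tau extended by the final step d.\<close>

inductive path :: "('n \<Rightarrow> ('n,'a) node) \<Rightarrow> 'n \<Rightarrow> dir list \<Rightarrow> 'n \<Rightarrow> bool"
  for G where
  path_nil: "path G n [] n"
| path_abs: "path G n \<tau> m \<Longrightarrow> G m = Abs m' \<Longrightarrow> path G n (DDown # \<tau>) m'"
| path_left: "path G n \<tau> m \<Longrightarrow> G m = App m1 m2 \<Longrightarrow> path G n (DLeft # \<tau>) m1"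
| path_right: "path G n \<tau> m \<Longrightarrow> G m = App m1 m2 \<Longrightarrow> path G n (DRight # \<tau>) m2"

fun crosses :: "('n \<Rightarrow> ('n,'a) node) \<Rightarrow> 'n \<Rightarrow> dir list \<Rightarrow> 'n \<Rightarrow> bool" where
  "crosses G n [] m = path G n [] m"
| "crosses G n (d # \<tau>) m = (path G n (d # \<tau>) m \<or> crosses G n \<tau> m)"

definition is_root :: "('n \<Rightarrow> ('n,'a) node) \<Rightarrow> 'n \<Rightarrow> bool" where
  "is_root G r \<longleftrightarrow> (\<forall>n \<tau>. path G n \<tau> r \<longrightarrow> \<tau> = [])"

definition dominates :: "('n \<Rightarrow> ('n,'a) node) \<Rightarrow> 'n \<Rightarrow> 'n \<Rightarrow> bool" where
  "dominates G m n \<longleftrightarrow> (\<forall>r \<tau>. is_root G r \<and> path G r \<tau> n \<longrightarrow> crosses G r \<tau> m)"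

definition pre_lambda_graph :: "('n \<Rightarrow> ('n,'a) node) \<Rightarrow> bool" where
  "pre_lambda_graph G \<longleftrightarrow>
     (\<forall>v l. G v = BVar l \<longrightarrow> (\<exists>b. G l = Abs b)) \<and>
     (\<forall>n m a. G n = FVar a \<and> G m = FVar a \<longrightarrow> n = m)"

definition lambda_graph :: "('n \<Rightarrow> ('n,'a) node) \<Rightarrow> bool" where
  "lambda_graph G \<longleftrightarrow> pre_lambda_graph G \<and> finite (UNIV :: 'n set) \<and>
     (\<forall>n \<tau>. path G n \<tau> n \<longrightarrow> \<tau> = []) \<and>
     (\<forall>v l. G v = BVar l \<longrightarrow> dominates G l v)"

fun same_kind :: "('n,'a) node \<Rightarrow> ('n,'a) node \<Rightarrow> bool" where
  "same_kind (App _ _) (App _ _) = True"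
| "same_kind (Abs _) (Abs _) = True"
| "same_kind (FVar _) (FVar _) = True"
| "same_kind (BVar _) (BVar _) = True"
| "same_kind _ _ = False"

definition homogeneous :: "('n \<Rightarrow> ('n,'a) node) \<Rightarrow> 'n rel \<Rightarrow> bool" where
  "homogeneous G R \<longleftrightarrow> (\<forall>n m. (n, m) \<in> R \<longrightarrow> same_kind (G n) (G m))"

definition propagated :: "('n \<Rightarrow> ('n,'a) node) \<Rightarrow> 'n rel \<Rightarrow> bool" where
  "propagated G R \<longleftrightarrow>
     (\<forall>n m n1 n2 m1 m2. (n, m) \<in> R \<and> G n = App n1 n2 \<and> G m = App m1 m2 \<longrightarrow> (n1, m1) \<in> R) \<and>
     (\<forall>n m n' m'. (n, m) \<in> R \<and> G n = Abs n' \<and> G m = Abs m' \<longrightarrow> (n', m') \<in> R) \<and>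
     (\<forall>n m n1 n2 m1 m2. (n, m) \<in> R \<and> G n = App n1 n2 \<and> G m = App m1 m2 \<longrightarrow> (n2, m2) \<in> R)"

definition var_closed :: "('n \<Rightarrow> ('n,'a) node) \<Rightarrow> 'n rel \<Rightarrow> bool" where
  "var_closed G R \<longleftrightarrow> (\<forall>n m l l'. (n, m) \<in> R \<and> G n = BVar l \<and> G m = BVar l' \<longrightarrow> (l, l') \<in> R)"

definition open_rel :: "('n \<Rightarrow> ('n,'a) node) \<Rightarrow> 'n rel \<Rightarrow> bool" where
  "open_rel G R \<longleftrightarrow> (\<forall>n m a b. (n, m) \<in> R \<and> G n = FVar a \<and> G m = FVar b \<longrightarrow> n = m)"

definition bisimulation :: "('n \<Rightarrow> ('n,'a) node) \<Rightarrow> 'n rel \<Rightarrow> bool" where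
  "bisimulation G R \<longleftrightarrow> homogeneous G R \<and> propagated G R \<and> var_closed G R"

definition sharing_equivalence :: "('n \<Rightarrow> ('n,'a) node) \<Rightarrow> 'n rel \<Rightarrow> bool" where
  "sharing_equivalence G R \<longleftrightarrow> open_rel G R \<and> bisimulation G R \<and> equiv UNIV R"

definition propagation :: "('n \<Rightarrow> ('n,'a) node) \<Rightarrow> 'n rel \<Rightarrow> 'n rel" where
  "propagation G R = \<Inter>{S. R \<subseteq> S \<and> propagated G S}"

definition spreading :: "('n \<Rightarrow> ('n,'a) node) \<Rightarrow> 'n rel \<Rightarrow> 'n rel" where
  "spreading G R = \<Inter>{S. R \<subseteq> S \<and> propagated G S \<and> equiv UNIV S}"

definition is_query :: "('n \<Rightarrow> ('n,'a) node) \<Rightarrow> 'n rel \<Rightarrow> bool" where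
  "is_query G Q \<longleftrightarrow> (\<forall>r s. (r, s) \<in> Q \<longrightarrow> is_root G r \<and> is_root G s)"

end

theory Submission
  imports Defs
begin

lemma path_det: "path G n \<tau> m \<Longrightarrow> path G n \<tau> m' \<Longrightarrow> m = m'"
proof (induction arbitrary: m' rule: path.induct)
  case (path_nil n) then show ?case by (cases rule: path.cases) auto
next
  case (path_abs n \<tau> m m'')
  from path_abs.prems show ?case by (cases rule: path.cases) (use path_abs in fastforce)+
next
  case (path_left n \<tau> m m1 m2)
  from path_left.prems show ?case by (cases rule: path.cases) (use path_left in fastforce)+
next
  case (path_right n \<tau> m m1 m2)
  from path_right.prems show ?case by (cases rule: path.cases) (use path_right in fastforce)+
qed

lemma path_comp: "path G b \<rho> c \<Longrightarrow> path G a \<sigma> b \<Longrightarrow> path G a (\<rho> @ \<sigma>) c"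
  by (induction rule: path.induct) (auto intro: path.intros)

lemma path_split: "path G n (\<sigma> @ \<rho>) m \<Longrightarrow> \<exists>p. path G n \<rho> p \<and> path G p \<sigma> m"
proof (induction \<sigma> arbitrary: m)
  case Nil then show ?case by (auto intro: path.intros)
next
  case (Cons d \<sigma>)
  from Cons.prems show ?case
    by (cases rule: path.cases) (use Cons.IH in \<open>fastforce intro: path.intros\<close>)+
qed

lemma path_drop: "path G n \<tau> m \<Longrightarrow> \<exists>p. path G n (drop k \<tau>) p"
  using path_split[of G n "take k \<tau>" "drop k \<tau>" m] by auto

lemma crosses_drop: "crosses G n \<tau> m \<Longrightarrow> \<exists>k\<le>length \<tau>. path G n (drop k \<tau>) m"
proof (induction \<tau>)
  case Nil then show ?case by auto
next
  case (Cons d \<tau>)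
  show ?case
  proof (cases "path G n (d # \<tau>) m")
    case True then show ?thesis by (intro exI[of _ 0]) auto
  next
    case False
    with Cons.prems have "crosses G n \<tau> m" by simp
    with Cons.IH obtain k where "k \<le> length \<tau>" "path G n (drop k \<tau>) m" by blast
    then show ?thesis by (intro exI[of _ "Suc k"]) auto
  qed
qed

lemma propD1: "propagated G S \<Longrightarrow> (n, m) \<in> S \<Longrightarrow> G n = App n1 n2 \<Longrightarrow> G m = App m1 m2 \<Longrightarrow> (n1, m1) \<in> S"
  unfolding propagated_def by blast
lemma propD2: "propagated G S \<Longrightarrow> (n, m) \<in> S \<Longrightarrow> G n = Abs n' \<Longrightarrow> G m = Abs m' \<Longrightarrow> (n', m') \<in> S"
  unfolding propagated_def by blast
lemma propD3: "propagated G S \<Longrightarrow> (n, m) \<in> S \<Longrightarrow> G n = App n1 n2 \<Longrightarrow> G m = App m1 m2 \<Longrightarrow> (n2, m2) \<in> S"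
  unfolding propagated_def by blast
lemma propI:
  assumes "\<And>n m n1 n2 m1 m2. (n, m) \<in> S \<Longrightarrow> G n = App n1 n2 \<Longrightarrow> G m = App m1 m2 \<Longrightarrow> (n1, m1) \<in> S"
    and "\<And>n m n' m'. (n, m) \<in> S \<Longrightarrow> G n = Abs n' \<Longrightarrow> G m = Abs m' \<Longrightarrow> (n', m') \<in> S"
    and "\<And>n m n1 n2 m1 m2. (n, m) \<in> S \<Longrightarrow> G n = App n1 n2 \<Longrightarrow> G m = App m1 m2 \<Longrightarrow> (n2, m2) \<in> S"
  shows "propagated G S"
  unfolding propagated_def using assms by blast

lemma propagated_Inter: "\<forall>S\<in>F. propagated G S \<Longrightarrow> propagated G (\<Inter>F)"
  apply (rule propI)
  subgoal by (rule InterI) (metis InterE propD1)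
  subgoal by (rule InterI) (metis InterE propD2)
  subgoal by (rule InterI) (metis InterE propD3)
  done

lemma propagation_prop: "propagated G (propagation G Q)"
  unfolding propagation_def by (rule propagated_Inter) simp

lemma propagation_sub: "Q \<subseteq> S \<Longrightarrow> propagated G S \<Longrightarrow> propagation G Q \<subseteq> S"
  unfolding propagation_def by blast

lemma Q_sub_propagation: "Q \<subseteq> propagation G Q"
  unfolding propagation_def by blast

lemma path_ConsE: "path G n (d # \<tau>) m \<Longrightarrow> \<exists>m0. path G n \<tau> m0 \<and>
   ((d = DDown \<and> G m0 = Abs m) \<or> (d = DLeft \<and> (\<exists>m2. G m0 = App m m2)) \<or> (d = DRight \<and> (\<exists>m1. G m0 = App m1 m)))"
  by (erule path.cases) auto

lemma same_trace_in:
  assumes "(r, s) \<in> Q" "path G r \<tau> n" "path G s \<tau> m"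
  shows "(n, m) \<in> propagation G Q"
proof -
  note PP = propD1[OF propagation_prop] propD2[OF propagation_prop] propD3[OF propagation_prop]
  have "\<And>n m. path G r \<tau> n \<Longrightarrow> path G s \<tau> m \<Longrightarrow> (n, m) \<in> propagation G Q"
  proof (induction \<tau>)
    case Nil
    then have "n = r" "m = s" by (auto elim: path.cases)
    then show ?case using assms(1) Q_sub_propagation by blast
  next
    case (Cons d \<tau>)
    obtain n0 where n0: "path G r \<tau> n0"
      "(d = DDown \<and> G n0 = Abs n) \<or> (d = DLeft \<and> (\<exists>m2. G n0 = App n m2)) \<or> (d = DRight \<and> (\<exists>m1. G n0 = App m1 n))"
      using path_ConsE[OF Cons.prems(1)] by blast
    obtain m0 where m0: "path G s \<tau> m0"
      "(d = DDown \<and> G m0 = Abs m) \<or> (d = DLeft \<and> (\<exists>m2. G m0 = App m m2)) \<or> (d = DRight \<and> (\<exists>m1. G m0 = App m1 m))"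
      using path_ConsE[OF Cons.prems(2)] by blast
    have nm0: "(n0, m0) \<in> propagation G Q" by (rule Cons.IH[OF n0(1) m0(1)])
    show ?case
    proof (cases d)
      case DLeft
      with n0(2) m0(2) obtain a b where "G n0 = App n a" "G m0 = App m b" by auto
      then show ?thesis using PP(1)[OF nm0] by blast
    next
      case DDown
      with n0(2) m0(2) have "G n0 = Abs n" "G m0 = Abs m" by auto
      then show ?thesis using PP(2)[OF nm0] by blast
    next
      case DRight
      with n0(2) m0(2) obtain a b where "G n0 = App a n" "G m0 = App b m" by auto
      then show ?thesis using PP(3)[OF nm0] by blast
    qed
  qed
  then show ?thesis using assms by blast
qed

definition strace :: "('n \<Rightarrow> ('n,'a) node) \<Rightarrow> 'n rel \<Rightarrow> 'n rel" where
  "strace G Q = {(n, m). \<exists>r s \<tau>. (r, s) \<in> Q \<and> path G r \<tau> n \<and> path G s \<tau> m}"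

lemma straceI: "(r, s) \<in> Q \<Longrightarrow> path G r \<tau> n \<Longrightarrow> path G s \<tau> m \<Longrightarrow> (n, m) \<in> strace G Q"
  unfolding strace_def by blast

lemma straceE: "(n, m) \<in> strace G Q \<Longrightarrow> \<exists>r s \<tau>. (r, s) \<in> Q \<and> path G r \<tau> n \<and> path G s \<tau> m"
  unfolding strace_def by simp

lemma strace_prop: "propagated G (strace G Q)"
proof (rule propI)
  fix n m n1 n2 m1 m2 assume h: "(n, m) \<in> strace G Q" and gn: "G n = App n1 n2" and gm: "G m = App m1 m2"
  from straceE[OF h] obtain r s \<tau> where o: "(r, s) \<in> Q" "path G r \<tau> n" "path G s \<tau> m" by blast
  show "(n1, m1) \<in> strace G Q"
    by (rule straceI[OF o(1) path_left[OF o(2) gn] path_left[OF o(3) gm]])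
next
  fix n m n' m' assume h: "(n, m) \<in> strace G Q" and gn: "G n = Abs n'" and gm: "G m = Abs m'"
  from straceE[OF h] obtain r s \<tau> where o: "(r, s) \<in> Q" "path G r \<tau> n" "path G s \<tau> m" by blast
  show "(n', m') \<in> strace G Q"
    by (rule straceI[OF o(1) path_abs[OF o(2) gn] path_abs[OF o(3) gm]])
next
  fix n m n1 n2 m1 m2 assume h: "(n, m) \<in> strace G Q" and gn: "G n = App n1 n2" and gm: "G m = App m1 m2"
  from straceE[OF h] obtain r s \<tau> where o: "(r, s) \<in> Q" "path G r \<tau> n" "path G s \<tau> m" by blast
  show "(n2, m2) \<in> strace G Q"
    by (rule straceI[OF o(1) path_right[OF o(2) gn] path_right[OF o(3) gm]])
qed

lemma propagation_strace: "propagation G Q \<subseteq> strace G Q"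
proof (rule propagation_sub[OF _ strace_prop])
  show "Q \<subseteq> strace G Q"
  proof
    fix p assume "p \<in> Q"
    then show "p \<in> strace G Q" by (cases p) (simp add: straceI[OF _ path_nil path_nil])
  qed
qed

lemma follow:
  assumes hom: "homogeneous G S" and pr: "propagated G S"
  shows "(x, y) \<in> S \<Longrightarrow> path G x \<sigma> z \<Longrightarrow> \<exists>w. path G y \<sigma> w \<and> (z, w) \<in> S"
proof (induction \<sigma> arbitrary: z)
  case Nil then show ?case by (auto elim: path.cases intro: path.intros)
next
  case (Cons d \<sigma>)
  from Cons.prems(2) show ?case
  proof (cases rule: path.cases)
    case (path_abs z0)
    with Cons obtain w0 where w0: "path G y \<sigma> w0" "(z0, w0) \<in> S" by blast
    with hom path_abs obtain w' where "G w0 = Abs w'"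
      unfolding homogeneous_def by (cases "G w0") fastforce+
    with w0 path_abs propD2[OF pr] show ?thesis by (blast intro: path.intros)
  next
    case (path_left z0 z2)
    with Cons obtain w0 where w0: "path G y \<sigma> w0" "(z0, w0) \<in> S" by blast
    with hom path_left obtain w1 w2 where "G w0 = App w1 w2"
      unfolding homogeneous_def by (cases "G w0") fastforce+
    with w0 path_left propD1[OF pr] show ?thesis by (blast intro: path.intros)
  next
    case (path_right z0 z1)
    with Cons obtain w0 where w0: "path G y \<sigma> w0" "(z0, w0) \<in> S" by blast
    with hom path_right obtain w1 w2 where "G w0 = App w1 w2"
      unfolding homogeneous_def by (cases "G w0") fastforce+
    with w0 path_right propD3[OF pr] show ?thesis by (blast intro: path.intros)
  qed
qed

lemma no_desc:
  assumes hom: "homogeneous G S" and pr: "propagated G S"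
    and fin: "finite (UNIV :: 'n set)" and acyc: "\<forall>n \<tau>. path G n \<tau> n \<longrightarrow> \<tau> = []"
    and xy: "(x, y) \<in> S" and p: "path G x \<sigma> (y::'n)" and ne: "\<sigma> \<noteq> []"
  shows False
proof -
  define P where "P u \<longleftrightarrow> (\<exists>v. (u, v) \<in> S \<and> path G u \<sigma> v)" for u
  define g where "g u = (SOME v. (u, v) \<in> S \<and> path G u \<sigma> v)" for u
  have gP: "(u, g u) \<in> S \<and> path G u \<sigma> (g u)" if "P u" for u
    using that unfolding P_def g_def by (rule someI_ex)
  have Pg: "P (g u)" if "P u" for u
    using gP[OF that] follow[OF hom pr] unfolding P_def by blast
  define seq where "seq k = (g ^^ k) x" for k
  have Pseq: "P (seq k)" for k
    by (induction k) (use xy p Pg in \<open>auto simp: seq_def P_def\<close>)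
  have step: "path G (seq k) \<sigma> (seq (Suc k))" for k
    using gP[OF Pseq[of k]] by (simp add: seq_def)
  have chain: "\<exists>\<tau>. \<tau> \<noteq> [] \<and> path G (seq i) \<tau> (seq j)" if "i < j" for i j
    using that
  proof (induction j)
    case 0 then show ?case by simp
  next
    case (Suc j)
    show ?case
    proof (cases "i = j")
      case True then show ?thesis using step ne by blast
    next
      case False
      with Suc obtain \<tau> where "\<tau> \<noteq> []" "path G (seq i) \<tau> (seq j)" by auto
      then show ?thesis using path_comp[OF step[of j]] by blast
    qed
  qed
  have "\<not> inj seq"
  proof
    assume "inj seq"
    then have "finite (UNIV :: nat set)"
      using fin finite_imageD[of seq UNIV] finite_subset[of "range seq" UNIV]
      by (meson inj_on_subset subset_UNIV)
    then show False by simp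
  qed
  then obtain i j where "i \<noteq> j" "seq i = seq j" unfolding inj_def by blast
  then obtain i j where "i < j" "seq i = seq j"
    by (metis linorder_neq_iff)
  with chain acyc show False by metis
qed

lemma spreading_sub: "S \<subseteq> spreading G Q \<longleftrightarrow> (\<forall>T. Q \<subseteq> T \<and> propagated G T \<and> equiv UNIV T \<longrightarrow> S \<subseteq> T)"
  unfolding spreading_def by blast

lemma spreading_prop: "propagated G (spreading G Q)"
  unfolding spreading_def by (rule propagated_Inter) simp

lemma spreading_le: "Q \<subseteq> T \<Longrightarrow> propagated G T \<Longrightarrow> equiv UNIV T \<Longrightarrow> spreading G Q \<subseteq> T"
  unfolding spreading_def by blast

lemma prop_sub_spreading: "propagation G Q \<subseteq> spreading G Q"
  by (rule propagation_sub[OF _ spreading_prop]) (simp add: spreading_sub)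

lemma path_split2: "path G n \<tau> m \<Longrightarrow> \<exists>p. path G n (drop k \<tau>) p \<and> path G p (take k \<tau>) m"
  using path_split[of G n "take k \<tau>" "drop k \<tau>" m] by simp

lemma vcD: "var_closed G R \<Longrightarrow> (n, m) \<in> R \<Longrightarrow> G n = BVar l \<Longrightarrow> G m = BVar l' \<Longrightarrow> (l, l') \<in> R"
  unfolding var_closed_def by blast

lemma domD: "dominates G m n \<Longrightarrow> is_root G r \<Longrightarrow> path G r \<tau> n \<Longrightarrow> crosses G r \<tau> m"
  unfolding dominates_def by blast

lemma queryD: "is_query G Q \<Longrightarrow> (r, s) \<in> Q \<Longrightarrow> is_root G r \<and> is_root G s"
  unfolding is_query_def by blast

lemma dir2:
  fixes G :: "'n \<Rightarrow> ('n, 'a) node"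
  assumes lg: "lambda_graph G" and q: "is_query G Q"
    and sh: "sharing_equivalence G (spreading G Q)"
  shows "open_rel G (propagation G Q) \<and> bisimulation G (propagation G Q)"
proof -
  let ?S = "spreading G Q" and ?P = "propagation G Q"
  have sub: "?P \<subseteq> ?S" by (rule prop_sub_spreading)
  have homS: "homogeneous G ?S" and prS: "propagated G ?S" and vcS: "var_closed G ?S"
    and eqS: "equiv UNIV ?S" and opS: "open_rel G ?S"
    using sh unfolding sharing_equivalence_def bisimulation_def by auto
  have fin: "finite (UNIV :: 'n set)" and acyc: "\<forall>n \<tau>. path G n \<tau> n \<longrightarrow> \<tau> = []"
    and dom: "\<forall>v l. G v = BVar l \<longrightarrow> dominates G l v"
    using lg unfolding lambda_graph_def by auto
  have symS: "(a, b) \<in> ?S \<Longrightarrow> (b, a) \<in> ?S" for a b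
    using eqS unfolding equiv_def sym_def by blast
  have transS: "(a, b) \<in> ?S \<Longrightarrow> (b, c) \<in> ?S \<Longrightarrow> (a, c) \<in> ?S" for a b c
    using eqS unfolding equiv_def trans_def by blast
  have opP: "open_rel G ?P" unfolding open_rel_def
  proof (intro allI impI, elim conjE)
    fix n m a b assume "(n, m) \<in> ?P" "G n = FVar a" "G m = FVar b"
    then show "n = m" using opS subsetD[OF sub] unfolding open_rel_def by blast
  qed
  have homP: "homogeneous G ?P" unfolding homogeneous_def
  proof (intro allI impI)
    fix n m assume "(n, m) \<in> ?P"
    then have "(n, m) \<in> ?S" using sub by blast
    then show "same_kind (G n) (G m)" using homS unfolding homogeneous_def by blast
  qed
  have vcP: "var_closed G ?P"
    unfolding var_closed_def
  proof (intro allI impI, elim conjE)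
    fix v v' l l'
    assume vv: "(v, v') \<in> ?P" and gv: "G v = BVar l" and gv': "G v' = BVar l'"
    have vvS: "(v, v') \<in> ?S" using sub vv by blast
    have ll: "(l, l') \<in> ?S" by (rule vcD[OF vcS vvS gv gv'])
    from straceE[OF subsetD[OF propagation_strace vv]] obtain r s \<tau> where rs: "(r, s) \<in> Q"
      and pr: "path G r \<tau> v" and ps: "path G s \<tau> v'" by blast
    have rr: "is_root G r" "is_root G s" using queryD[OF q rs] by simp_all
    have d1: "dominates G l v" using dom[rule_format, OF gv] .
    have d2: "dominates G l' v'" using dom[rule_format, OF gv'] .
    have "crosses G r \<tau> l" by (rule domD[OF d1 rr(1) pr])
    then obtain i where i: "i \<le> length \<tau>" "path G r (drop i \<tau>) l" using crosses_drop by metis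
    have "crosses G s \<tau> l'" by (rule domD[OF d2 rr(2) ps])
    then obtain j where j: "j \<le> length \<tau>" "path G s (drop j \<tau>) l'" using crosses_drop by metis
    obtain a where a: "path G s (drop i \<tau>) a" using path_drop[OF ps] by blast
    have la: "(l, a) \<in> ?P" using same_trace_in[OF rs i(2) a] .
    have laS: "(l, a) \<in> ?S" using sub la by blast
    have al: "(a, l') \<in> ?S" by (rule transS[OF symS[OF laS] ll])
    consider "i = j" | "i < j" | "j < i" by linarith
    then show "(l, l') \<in> ?P"
    proof cases
      case 1
      then have "a = l'" using path_det[OF a] j(2) by simp
      then show ?thesis using la by simp
    next
      case 2
      obtain p where p1: "path G s (drop (j - i) (drop i \<tau>)) p"
        and p2: "path G p (take (j - i) (drop i \<tau>)) a"
        using path_split2[OF a] by blast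
      have "j - i + i = j" using 2 by simp
      then have "drop (j - i) (drop i \<tau>) = drop j \<tau>" by simp
      with p1 have "p = l'" using path_det j(2) by metis
      with p2 have pa: "path G l' (take (j - i) (drop i \<tau>)) a" by simp
      have "take (j - i) (drop i \<tau>) \<noteq> []" using 2 j by simp
      then show ?thesis using no_desc[OF homS prS fin acyc symS[OF al] pa] by blast
    next
      case 3
      obtain p where p1: "path G s (drop (i - j) (drop j \<tau>)) p"
        and p2: "path G p (take (i - j) (drop j \<tau>)) l'"
        using path_split2[OF j(2)] by blast
      have "i - j + j = i" using 3 by simp
      then have "drop (i - j) (drop j \<tau>) = drop i \<tau>" by simp
      with p1 have "p = a" using path_det a by metis
      with p2 have pa: "path G a (take (i - j) (drop j \<tau>)) l'" by simp
      have "take (i - j) (drop j \<tau>) \<noteq> []" using 3 i by simp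
      then show ?thesis using no_desc[OF homS prS fin acyc al pa] by blast
    qed
  qed
  show ?thesis unfolding bisimulation_def by (intro conjI opP homP vcP propagation_prop)
qed

lemma inv_rt:
  assumes hom: "homogeneous G R" and pr: "propagated G R" and vc: "var_closed G R"
    and op: "open_rel G R"
  shows "(x, y) \<in> R\<^sup>* \<Longrightarrow>
    (\<forall>x1 x2. G x = App x1 x2 \<longrightarrow> (\<exists>y1 y2. G y = App y1 y2 \<and> (x1, y1) \<in> R\<^sup>* \<and> (x2, y2) \<in> R\<^sup>*)) \<and>
    (\<forall>x1. G x = Abs x1 \<longrightarrow> (\<exists>y1. G y = Abs y1 \<and> (x1, y1) \<in> R\<^sup>*)) \<and>
    (\<forall>a. G x = FVar a \<longrightarrow> y = x) \<and>
    (\<forall>l. G x = BVar l \<longrightarrow> (\<exists>l'. G y = BVar l' \<and> (l, l') \<in> R\<^sup>*))"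
proof (induction rule: rtrancl_induct)
  case base then show ?case by auto
next
  case (step y z)
  have sk: "same_kind (G y) (G z)" using hom step(2) unfolding homogeneous_def by blast
  show ?case
  proof (cases "G x")
    case (App x1 x2)
    with step(3) obtain y1 y2 where y: "G y = App y1 y2" "(x1, y1) \<in> R\<^sup>*" "(x2, y2) \<in> R\<^sup>*" by blast
    with sk obtain z1 z2 where z: "G z = App z1 z2" by (cases "G z") auto
    have "(y1, z1) \<in> R" "(y2, z2) \<in> R" using propD1[OF pr] propD3[OF pr] step(2) y z by blast+
    with y z App show ?thesis by (auto intro: rtrancl_into_rtrancl)
  next
    case (Abs x1)
    with step(3) obtain y1 where y: "G y = Abs y1" "(x1, y1) \<in> R\<^sup>*" by blast
    with sk obtain z1 where z: "G z = Abs z1" by (cases "G z") auto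
    have "(y1, z1) \<in> R" using propD2[OF pr] step(2) y z by blast
    with y z Abs show ?thesis by (auto intro: rtrancl_into_rtrancl)
  next
    case (FVar a)
    with step(3) have y: "y = x" by blast
    with FVar sk obtain b where z: "G z = FVar b" by (cases "G z") auto
    have "y = z" using op step(2) y z FVar unfolding open_rel_def by blast
    with y FVar show ?thesis by auto
  next
    case (BVar l)
    with step(3) obtain l1 where y: "G y = BVar l1" "(l, l1) \<in> R\<^sup>*" by blast
    with sk obtain l2 where z: "G z = BVar l2" by (cases "G z") auto
    have "(l1, l2) \<in> R" using vc step(2) y z unfolding var_closed_def by blast
    with y z BVar show ?thesis by (auto intro: rtrancl_into_rtrancl)
  qed
qed

lemma same_kind_sym: "same_kind a b \<Longrightarrow> same_kind b a"
  by (cases a; cases b) auto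

lemma equiv_Inter: "\<forall>S\<in>F. equiv UNIV S \<Longrightarrow> equiv UNIV (\<Inter>F)"
proof -
  assume H: "\<forall>S\<in>F. equiv UNIV S"
  show ?thesis
  proof (rule equivI)
    show "\<Inter>F \<subseteq> UNIV \<times> UNIV" by simp
  next
    show "refl (\<Inter>F)"
    proof (rule refl_onI)
      fix x show "(x, x) \<in> \<Inter>F"
      proof
        fix S assume "S \<in> F" with H have "equiv UNIV S" by blast
        then show "(x, x) \<in> S" by (simp add: equiv_def refl_on_def)
      qed
    qed
  next
    show "sym (\<Inter>F)"
    proof (rule symI)
      fix x y assume xy: "(x, y) \<in> \<Inter>F" show "(y, x) \<in> \<Inter>F"
      proof
        fix S assume S: "S \<in> F" with H have "equiv UNIV S" by blast
        moreover from xy S have "(x, y) \<in> S" by blast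
        ultimately show "(y, x) \<in> S" unfolding equiv_def sym_def by blast
      qed
    qed
  next
    show "trans (\<Inter>F)"
    proof (rule transI)
      fix x y z assume xy: "(x, y) \<in> \<Inter>F" and yz: "(y, z) \<in> \<Inter>F" show "(x, z) \<in> \<Inter>F"
      proof
        fix S assume S: "S \<in> F" with H have "equiv UNIV S" by blast
        moreover from xy yz S have "(x, y) \<in> S" "(y, z) \<in> S" by blast+
        ultimately show "(x, z) \<in> S" unfolding equiv_def trans_def by blast
      qed
    qed
  qed
qed

lemma dir1:
  assumes opP: "open_rel G (propagation G Q)" and bP: "bisimulation G (propagation G Q)"
  shows "sharing_equivalence G (spreading G Q)"
proof -
  let ?P = "propagation G Q"
  let ?R = "?P \<union> ?P\<inverse>"
  let ?E = "?R\<^sup>*"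
  have homP: "homogeneous G ?P" using bP unfolding bisimulation_def by blast
  have homR: "homogeneous G ?R" unfolding homogeneous_def
  proof (intro allI impI)
    fix n m assume "(n, m) \<in> ?R"
    then consider "(n, m) \<in> ?P" | "(m, n) \<in> ?P" by blast
    then show "same_kind (G n) (G m)"
      by cases (use homP same_kind_sym in \<open>unfold homogeneous_def, blast+\<close>)
  qed
  have prP: "propagated G ?P" using bP unfolding bisimulation_def by blast
  have prR: "propagated G ?R"
    by (rule propI) (use propD1[OF prP] propD2[OF prP] propD3[OF prP] in blast)+
  have vcP: "var_closed G ?P" using bP unfolding bisimulation_def by blast
  have vcR: "var_closed G ?R" using vcP unfolding var_closed_def by blast
  have opR: "open_rel G ?R" using opP unfolding open_rel_def by blast
  note inv = inv_rt[OF homR prR vcR opR]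
  have eqE: "equiv UNIV ?E"
    by (intro equivI refl_rtrancl trans_rtrancl sym_rtrancl sym_Un_converse) simp
  have prE: "propagated G ?E"
  proof (rule propI)
    fix n m n1 n2 m1 m2 assume h: "(n, m) \<in> ?E" "G n = App n1 n2" "G m = App m1 m2"
    from conjunct1[OF inv[OF h(1)]] h(2) obtain y1 y2 where
      "G m = App y1 y2" "(n1, y1) \<in> ?E" by blast
    with h(3) show "(n1, m1) \<in> ?E" by simp
  next
    fix n m n' m' assume h: "(n, m) \<in> ?E" "G n = Abs n'" "G m = Abs m'"
    from conjunct1[OF conjunct2[OF inv[OF h(1)]]] h(2) obtain y1 where
      "G m = Abs y1" "(n', y1) \<in> ?E" by blast
    with h(3) show "(n', m') \<in> ?E" by simp
  next
    fix n m n1 n2 m1 m2 assume h: "(n, m) \<in> ?E" "G n = App n1 n2" "G m = App m1 m2"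
    from conjunct1[OF inv[OF h(1)]] h(2) obtain y1 y2 where
      "G m = App y1 y2" "(n2, y2) \<in> ?E" by blast
    with h(3) show "(n2, m2) \<in> ?E" by simp
  qed
  have QE: "Q \<subseteq> ?E" using Q_sub_propagation[of Q G] by auto
  have S1: "spreading G Q \<subseteq> ?E" by (rule spreading_le[OF QE prE eqE])
  have eqS: "equiv UNIV (spreading G Q)"
    unfolding spreading_def by (rule equiv_Inter) simp
  have PS: "?P \<subseteq> spreading G Q" by (rule prop_sub_spreading)
  have symS: "(a, b) \<in> spreading G Q \<Longrightarrow> (b, a) \<in> spreading G Q" for a b
    using eqS unfolding equiv_def sym_def by blast
  have transS: "(a, b) \<in> spreading G Q \<Longrightarrow> (b, c) \<in> spreading G Q \<Longrightarrow> (a, c) \<in> spreading G Q" for a b c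
    using eqS unfolding equiv_def trans_def by blast
  have reflS: "(a, a) \<in> spreading G Q" for a
    using eqS unfolding equiv_def refl_on_def by blast
  have "?E \<subseteq> spreading G Q"
  proof
    fix p assume "p \<in> ?E"
    then obtain a b where ab: "p = (a, b)" "(a, b) \<in> ?E" by (cases p) auto
    from ab(2) have "(a, b) \<in> spreading G Q"
    proof (induction rule: rtrancl_induct)
      case base then show ?case by (rule reflS)
    next
      case (step y z)
      then have "(y, z) \<in> spreading G Q" using PS symS by blast
      with step(3) show ?case by (rule transS)
    qed
    with ab show "p \<in> spreading G Q" by simp
  qed
  with S1 have SE: "spreading G Q = ?E" by blast
  have homE: "homogeneous G ?E" unfolding homogeneous_def
  proof (intro allI impI)
    fix n m assume nm: "(n, m) \<in> ?E"
    note I = inv[OF nm]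
    show "same_kind (G n) (G m)"
    proof (cases "G n")
      case (App x1 x2) then show ?thesis using conjunct1[OF I] by force
    next
      case (Abs x1) then show ?thesis using conjunct1[OF conjunct2[OF I]] by force
    next
      case (FVar a) then show ?thesis using conjunct1[OF conjunct2[OF conjunct2[OF I]]] by force
    next
      case (BVar l) then show ?thesis using conjunct2[OF conjunct2[OF conjunct2[OF I]]] by force
    qed
  qed
  have vcE: "var_closed G ?E" unfolding var_closed_def
  proof (intro allI impI, elim conjE)
    fix n m l l' assume h: "(n, m) \<in> ?E" "G n = BVar l" "G m = BVar l'"
    from conjunct2[OF conjunct2[OF conjunct2[OF inv[OF h(1)]]]] h(2) obtain l2 where
      "G m = BVar l2" "(l, l2) \<in> ?E" by blast
    with h(3) show "(l, l') \<in> ?E" by simp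
  qed
  have opE: "open_rel G ?E" unfolding open_rel_def
  proof (intro allI impI, elim conjE)
    fix n m a b assume h: "(n, m) \<in> ?E" "G n = FVar a" "G m = FVar b"
    from conjunct1[OF conjunct2[OF conjunct2[OF inv[OF h(1)]]]] h(2) show "n = m" by simp
  qed
  show ?thesis unfolding SE sharing_equivalence_def bisimulation_def
    by (intro conjI homE prE vcE opE eqE)
qed

theorem mainTheorem15:
  fixes G :: "'n \<Rightarrow> ('n, 'a) node" and Q :: "'n rel"
  assumes "lambda_graph G" and "is_query G Q"
  shows "(open_rel G (propagation G Q) \<and> bisimulation G (propagation G Q))
           \<longleftrightarrow> sharing_equivalence G (spreading G Q)"
proof
  assume "open_rel G (propagation G Q) \<and> bisimulation G (propagation G Q)"
  then show "sharing_equivalence G (spreading G Q)" using dir1 by blast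
next
  assume "sharing_equivalence G (spreading G Q)"
  then show "open_rel G (propagation G Q) \<and> bisimulation G (propagation G Q)"
    by (rule dir2[OF assms])
qed

end
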